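(* Fix a class $k$, data points with empirical mean $\hat{\boldsymbol\mu}_k$ and empirical covariance $\mathbf\Sigma_k$ (positive semidefinite), and $\gamma\ge0$ with $\gamma\hat{\boldsymbol\mu}_k\neq\mathbf 0$ or $\mathbf\Sigma_k$ full rank. Put $c=\frac{\gamma^2}{1+\gamma^2}\|\hat{\boldsymbol\mu}_k\|_2^2$ and $\mathbf M_\tau=\sigma_\tau^2\mathbf I+r_\tau^2(\mathbf\Sigma_k+c\mathbf I)$. For $T>0$ let $\mathbf z^c_t$, $t\in[0,T]$, solve $$\frac{d\mathbf z^c_t}{dt}=\mathbf z^c_t-\mathbf M_{T-t}^{-1}\mathbf z^c_t+\frac{r_{T-t}}{1+\gamma^2}\mathbf M_{T-t}^{-1}\hat{\boldsymbol\mu}_k,\qquad \mathbf z^c_0\sim\mathcal N(\mathbf 0,\mathbf I_d).$$ Then $\mathbf z^c_T$ is Gaussian and, as $T\to\infty$, its distribution converges to $$\mathcal N\Big(\frac{\hat{\boldsymbol\mu}_k}{1+\gamma^2},\ \mathbf\Sigma_k+\frac{\gamma^2}{1+\gamma^2}\|\hat{\boldsymbol\mu}_k\|_2^2\mathbf I\Big).$$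
   Context: Setup: for a fixed class $k$ the training data of class $k$ are $\mathbf x_1,\dots,\mathbf x_{n_k}\in\mathbb R^d$; the empirical mean is $\hat{\boldsymbol\mu}_k=\frac1{n_k}\sum_{i=1}^{n_k}\mathbf x_i$ and the empirical covariance is $\mathbf\Sigma_k=\frac1{n_k}\sum_{i=1}^{n_k}\mathbf x_i\mathbf x_i^\top-\hat{\boldsymbol\mu}_k\hat{\boldsymbol\mu}_k^\top$. For $t\ge0$ put $r_t=e^{-t}$ and $\sigma_t=\sqrt{1-e^{-2t}}$. $\gamma\ge0$ is the corruption control parameter. The ODE above is the deterministic reverse process $d\mathbf z_t=(\mathbf z_t+\hat s^c(\mathbf z_t,T-t))dt$ in forward time, with the score estimate $\hat s^c(\mathbf z,\tau)=-\mathbf M_\tau^{-1}\mathbf z+\frac{r_\tau}{1+\gamma^2}\mathbf M_\tau^{-1}\hat{\boldsymbol\mu}_k$ obtained from training with corrupted condition embeddings. *)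

theory Defs
  imports "HOL-Probability.Probability"
begin

definition outer :: "real^'n \<Rightarrow> real^'n \<Rightarrow> real^'n^'n" where
  "outer x y = (\<chi> i j. x $ i * y $ j)"

definition emp_mean :: "nat \<Rightarrow> (nat \<Rightarrow> real^'n) \<Rightarrow> real^'n" where
  "emp_mean n xs = (1 / real n) *\<^sub>R (\<Sum>i<n. xs i)"

definition emp_cov :: "nat \<Rightarrow> (nat \<Rightarrow> real^'n) \<Rightarrow> real^'n^'n" where
  "emp_cov n xs = (1 / real n) *\<^sub>R (\<Sum>i<n. outer (xs i) (xs i))
                   - outer (emp_mean n xs) (emp_mean n xs)"

definition r_sched :: "real \<Rightarrow> real" where
  "r_sched t = exp (- t)"

definition sigma_sched :: "real \<Rightarrow> real" where
  "sigma_sched t = sqrt (1 - exp (- 2 * t))"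

text \<open>Gaussian measure on R^n with mean m and covariance S, defined through its
  characteristic function (this also covers degenerate covariances).\<close>
definition is_gaussian :: "(real^'n) measure \<Rightarrow> real^'n \<Rightarrow> real^'n^'n \<Rightarrow> bool" where
  "is_gaussian N m S \<longleftrightarrow> prob_space N \<and> sets N = sets borel \<and>
     (\<forall>u. (CLINT x|N. cis (u \<bullet> x)) = cis (u \<bullet> m) * complex_of_real (exp (- (u \<bullet> (S *v u)) / 2)))"

definition gaussian :: "(real^'n) measure \<Rightarrow> bool" where
  "gaussian N \<longleftrightarrow> (\<exists>m S. is_gaussian N m S)"

definition weak_conv_at_top :: "(real \<Rightarrow> (real^'n) measure) \<Rightarrow> (real^'n) measure \<Rightarrow> bool" where
  "weak_conv_at_top F G \<longleftrightarrow>
     (\<forall>f :: real^'n \<Rightarrow> real. continuous_on UNIV f \<and> bounded (range f) \<longrightarrow>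
        ((\<lambda>T. integral\<^sup>L (F T) f) \<longlongrightarrow> integral\<^sup>L G f) at_top)"

end

theory Submission
  imports Defs "HOL-Real_Asymp.Real_Asymp"
begin


lemma real_lin_quad_zero:
  fixes \<beta> K :: real
  assumes "\<And>t. 2 * t * \<beta> \<le> t\<^sup>2 * K"
  shows "\<beta> = 0"
proof (rule ccontr)
  assume nz: "\<beta> \<noteq> 0"
  define s where "s = 1 / (\<bar>K\<bar> + 1)"
  have s: "s > 0" "s * K < 2" unfolding s_def
    by (auto simp: field_simps abs_if split: if_splits)
  have "2 * (s*\<beta>) * \<beta> \<le> (s*\<beta>)\<^sup>2 * K" by (rule assms)
  hence "(2 * s) * \<beta>\<^sup>2 \<le> (s * s * K) * \<beta>\<^sup>2" by (simp add: power2_eq_square algebra_simps)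
  moreover have "\<beta>\<^sup>2 > 0" using nz by simp
  ultimately have "2 * s \<le> s * s * K" using mult_le_cancel_right_pos by metis
  hence "2 \<le> s * K" using s(1) by (simp add: mult.assoc)
  with s show False by simp
qed

lemma spectral_step:
  fixes A :: "real^'n^'n" and B :: "(real^'n) set"
  assumes sym: "\<And>x y. (A *v x) \<bullet> y = x \<bullet> (A *v y)"
    and fin: "finite B" and cardB: "card B < CARD('n)"
    and eig: "\<And>b. b \<in> B \<Longrightarrow> A *v b = (b \<bullet> (A *v b)) *\<^sub>R b"
  obtains x0 where "norm x0 = 1" "\<And>b. b \<in> B \<Longrightarrow> b \<bullet> x0 = 0"
    "A *v x0 = (x0 \<bullet> (A *v x0)) *\<^sub>R x0"
proof -
  define S where "S = (\<Inter>b\<in>B. {y. b \<bullet> y = 0})"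
  have dimB: "dim B < DIM(real^'n)"
    using dim_le_card[of B B] fin cardB span_superset by fastforce
  obtain x where x: "x \<noteq> 0" "\<And>y. y \<in> span B \<Longrightarrow> orthogonal x y"
    using orthogonal_to_subspace_exists[OF dimB] by blast
  have xS: "x /\<^sub>R norm x \<in> S \<inter> sphere 0 1"
    using x span_base unfolding S_def orthogonal_def
    by (auto simp: inner_commute)
  have "closed S" unfolding S_def by (auto intro!: closed_INT closed_hyperplane)
  hence cK: "compact (S \<inter> sphere 0 1)" by (intro closed_Int_compact compact_sphere)
  have "continuous_on (S \<inter> sphere 0 1) (\<lambda>y. y \<bullet> (A *v y))"
    by (intro continuous_intros continuous_on_compose2[OF matrix_vector_mult_linear_continuous_on]) auto
  then obtain x0 where x0K: "x0 \<in> S \<inter> sphere 0 1"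
    and mx: "\<And>y. y \<in> S \<inter> sphere 0 1 \<Longrightarrow> y \<bullet> (A *v y) \<le> x0 \<bullet> (A *v x0)"
    using continuous_attains_sup[OF cK] xS by blast
  define q0 where "q0 = x0 \<bullet> (A *v x0)"
  have x0S: "x0 \<in> S" and nx0: "norm x0 = 1" using x0K by auto
  have Ssub: "u + t *\<^sub>R v \<in> S" if "u \<in> S" "v \<in> S" for u v t
    using that unfolding S_def by (auto simp: inner_add_right)
  have claim: "v \<bullet> (A *v x0) = 0" if vS: "v \<in> S" and vo: "x0 \<bullet> v = 0" for v
  proof (rule real_lin_quad_zero)
    fix t :: real
    define u where "u = x0 + t *\<^sub>R v"
    have uS: "u \<in> S" unfolding u_def by (rule Ssub[OF x0S vS])
    have nu2: "(norm u)\<^sup>2 = 1 + t\<^sup>2 * (v \<bullet> v)"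
    proof -
      have "(norm u)\<^sup>2 = u \<bullet> u" by (simp add: power2_norm_eq_inner)
      also have "\<dots> = x0 \<bullet> x0 + 2 * t * (x0 \<bullet> v) + t\<^sup>2 * (v \<bullet> v)"
        unfolding u_def by (simp add: inner_add_left inner_add_right inner_commute power2_eq_square algebra_simps)
      also have "x0 \<bullet> x0 = 1" using nx0 by (simp add: norm_eq_1)
      finally show ?thesis using vo by simp
    qed
    have nu: "norm u > 0" using nu2 by (metis add_pos_nonneg inner_ge_zero zero_less_one mult_nonneg_nonneg zero_le_power2 zero_less_norm_iff power_zero_numeral norm_zero  less_numeral_extra(3) zero_less_power2 norm_ge_zero)
    have "(u /\<^sub>R norm u) \<in> S \<inter> sphere 0 1"
      using uS nu unfolding S_def by (auto simp: inner_commute)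
    hence "(u /\<^sub>R norm u) \<bullet> (A *v (u /\<^sub>R norm u)) \<le> q0" using mx q0_def by blast
    hence that_le: "(u \<bullet> (A *v u)) / (norm u)\<^sup>2 \<le> q0"
      by (simp add: matrix_vector_mult_scaleR power2_eq_square divide_inverse mult.commute mult.left_commute)
    hence le: "u \<bullet> (A *v u) \<le> q0 * (1 + t\<^sup>2 * (v \<bullet> v))"
    proof -
      have "(norm u)\<^sup>2 > 0" using nu by simp
      thus ?thesis using that_le nu2 by (simp add: divide_le_eq)
    qed
    have sv: "x0 \<bullet> (A *v v) = v \<bullet> (A *v x0)" using sym[of x0 v] by (simp add: inner_commute)
    have "u \<bullet> (A *v u) = q0 + 2 * t * (v \<bullet> (A *v x0)) + t\<^sup>2 * (v \<bullet> (A *v v))"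
      unfolding u_def q0_def
      by (simp add: matrix_vector_right_distrib matrix_vector_mult_scaleR inner_add_left inner_add_right
          sv power2_eq_square algebra_simps)
    with le show "2 * t * (v \<bullet> (A *v x0)) \<le> t\<^sup>2 * (q0 * (v \<bullet> v) - v \<bullet> (A *v v))"
      by (simp add: algebra_simps)
  qed
  define w where "w = A *v x0 - q0 *\<^sub>R x0"
  have AS: "A *v x0 \<in> S" unfolding S_def
  proof safe
    fix b assume b: "b \<in> B"
    have "b \<bullet> (A *v x0) = (A *v b) \<bullet> x0" by (simp add: sym)
    also have "\<dots> = (b \<bullet> (A *v b)) * (b \<bullet> x0)" by (subst eig[OF b]) simp
    also have "\<dots> = 0" using x0S b unfolding S_def by simp
    finally show "b \<bullet> (A *v x0) = 0" .
  qed
  have wS: "w \<in> S" unfolding w_def using Ssub[OF AS x0S, of "-q0"] by simp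
  have x01: "x0 \<bullet> x0 = 1" using nx0 by (simp add: norm_eq_1)
  have wo: "x0 \<bullet> w = 0" unfolding w_def q0_def using x01 by (simp add: inner_diff_right)
  have "w \<bullet> w = w \<bullet> (A *v x0) - q0 * (w \<bullet> x0)" unfolding w_def
    by (simp add: inner_diff_right)
  also have "\<dots> = 0" using claim[OF wS wo] wo by (simp add: inner_commute)
  finally have "w = 0" by simp
  hence "A *v x0 = q0 *\<^sub>R x0" unfolding w_def by simp
  moreover have "b \<bullet> x0 = 0" if "b \<in> B" for b using x0S that unfolding S_def by auto
  ultimately show ?thesis using that nx0 q0_def by metis
qed

definition ONB :: "real^'n^'n \<Rightarrow> (real^'n) set \<Rightarrow> bool" where
  "ONB A B \<longleftrightarrow> finite B \<and> (\<forall>b\<in>B. norm b = 1) \<and> (\<forall>b\<in>B. \<forall>b'\<in>B. b \<noteq> b' \<longrightarrow> b \<bullet> b' = 0)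
     \<and> (\<forall>b\<in>B. A *v b = (b \<bullet> (A *v b)) *\<^sub>R b)"

lemma spectral_card:
  fixes A :: "real^'n^'n"
  assumes sym: "\<And>x y. (A *v x) \<bullet> y = x \<bullet> (A *v y)"
  shows "k \<le> CARD('n) \<Longrightarrow> \<exists>B. ONB A B \<and> card B = k"
proof (induction k)
  case 0
  show ?case by (rule exI[of _ "{}"]) (simp add: ONB_def)
next
  case (Suc k)
  then obtain B where B: "ONB A B" "card B = k" by auto
  with Suc.prems obtain x0 where x0: "norm x0 = 1" "\<And>b. b \<in> B \<Longrightarrow> b \<bullet> x0 = 0"
    "A *v x0 = (x0 \<bullet> (A *v x0)) *\<^sub>R x0"
    using spectral_step[OF sym, of B] unfolding ONB_def by auto
  have "x0 \<notin> B" using x0(1,2) by (metis norm_eq_1 zero_neq_one)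
  hence "card (insert x0 B) = Suc k" using B unfolding ONB_def by auto
  moreover have "ONB A (insert x0 B)" using B x0 unfolding ONB_def by (auto simp: inner_commute)
  ultimately show ?case by blast
qed

lemma ONB_expand:
  fixes A :: "real^'n^'n"
  assumes "ONB A B" "card B = CARD('n)"
  shows "x = (\<Sum>b\<in>B. (b \<bullet> x) *\<^sub>R b)"
proof -
  have fin: "finite B" and n1: "\<And>b. b \<in> B \<Longrightarrow> b \<bullet> b = 1"
    and orth: "\<And>b b'. b \<in> B \<Longrightarrow> b' \<in> B \<Longrightarrow> b \<noteq> b' \<Longrightarrow> b \<bullet> b' = 0"
    using assms unfolding ONB_def by (auto simp: norm_eq_1)
  have "independent B"
    by (rule pairwise_orthogonal_independent) (use n1 orth in \<open>auto simp: pairwise_def orthogonal_def\<close>, metis inner_zero_left zero_neq_one)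
  hence spanB: "span B = UNIV"
    using card_eq_dim[of B UNIV] assms fin by (auto simp: dim_UNIV)
  define v where "v = x - (\<Sum>b\<in>B. (b \<bullet> x) *\<^sub>R b)"
  have "c \<bullet> v = 0" if c: "c \<in> B" for c
  proof -
    have "c \<bullet> (\<Sum>b\<in>B. (b \<bullet> x) *\<^sub>R b) = (\<Sum>b\<in>B. (b \<bullet> x) * (c \<bullet> b))"
      by (simp add: inner_sum_right)
    also have "\<dots> = (\<Sum>b\<in>B. if b = c then c \<bullet> x else 0)"
      by (rule sum.cong) (auto simp: n1 orth c inner_commute)
    also have "\<dots> = c \<bullet> x" using c fin by simp
    finally show ?thesis unfolding v_def by (simp add: inner_diff_right)
  qed
  hence "orthogonal v v"
    using orthogonal_to_span[of v B v] spanB by (auto simp: orthogonal_def inner_commute)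
  hence "v = 0" by (simp add: orthogonal_def)
  thus ?thesis unfolding v_def by simp
qed



definition Op :: "(real^'n) set \<Rightarrow> (real^'n \<Rightarrow> real) \<Rightarrow> real^'n \<Rightarrow> real^'n" where
  "Op B g x = (\<Sum>b\<in>B. (g b * (b \<bullet> x)) *\<^sub>R b)"

locale onb =
  fixes A :: "real^'n^'n" and B :: "(real^'n) set"
  assumes onb: "ONB A B" and cardB: "card B = CARD('n)"
    and sym: "\<And>x y. (A *v x) \<bullet> y = x \<bullet> (A *v y)"
begin

lemma fin: "finite B" using onb by (simp add: ONB_def)
lemma n1: "b \<in> B \<Longrightarrow> b \<bullet> b = 1" using onb by (simp add: ONB_def norm_eq_1)
lemma orth: "b \<in> B \<Longrightarrow> b' \<in> B \<Longrightarrow> b \<noteq> b' \<Longrightarrow> b \<bullet> b' = 0" using onb by (simp add: ONB_def)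
lemma eig: "b \<in> B \<Longrightarrow> A *v b = (b \<bullet> (A *v b)) *\<^sub>R b" using onb by (simp add: ONB_def)

lemma expand: "x = (\<Sum>b\<in>B. (b \<bullet> x) *\<^sub>R b)" using ONB_expand[OF onb cardB] .

lemma eqI: assumes "\<And>c. c \<in> B \<Longrightarrow> c \<bullet> x = c \<bullet> y" shows "x = y"
  using expand[of x] expand[of y] assms by (metis (no_types, lifting) sum.cong)

lemma coord_Op: assumes c: "c \<in> B" shows "c \<bullet> Op B g x = g c * (c \<bullet> x)"
proof -
  have "c \<bullet> Op B g x = (\<Sum>b\<in>B. (g b * (b \<bullet> x)) * (c \<bullet> b))"
    by (simp add: Op_def inner_sum_right)
  also have "\<dots> = (\<Sum>b\<in>B. if b = c then g c * (c \<bullet> x) else 0)"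
    by (rule sum.cong) (auto simp: n1 orth c inner_commute)
  also have "\<dots> = g c * (c \<bullet> x)" using c fin by simp
  finally show ?thesis .
qed

lemma Op_1: "Op B (\<lambda>_. 1) x = x" by (rule eqI) (simp add: coord_Op)

lemma Op_comp: "Op B g (Op B h x) = Op B (\<lambda>b. g b * h b) x"
  by (rule eqI) (simp add: coord_Op)

lemma Op_linear: "linear (Op B g)"
  unfolding Op_def by (intro linear_compose_sum) (auto intro!: linearI simp: inner_add_right algebra_simps scaleR_add_left)

lemma Op_inner: "Op B g u \<bullet> x = u \<bullet> Op B g x"
  by (simp add: Op_def inner_sum_left inner_sum_right inner_commute mult.commute mult.left_commute)

lemma Op_add: "Op B (\<lambda>b. g b + h b) x = Op B g x + Op B h x"
  by (rule eqI) (simp add: coord_Op inner_add_right algebra_simps)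

lemma Op_scale: "Op B (\<lambda>b. k * g b) x = k *\<^sub>R Op B g x"
  by (rule eqI) (simp add: coord_Op)

lemma A_Op: "A *v x = Op B (\<lambda>b. b \<bullet> (A *v b)) x"
proof (rule eqI)
  fix c assume c: "c \<in> B"
  have "c \<bullet> (A *v x) = (A *v c) \<bullet> x" by (simp add: sym)
  also have "\<dots> = (c \<bullet> (A *v c)) * (c \<bullet> x)" by (subst eig[OF c]) simp
  finally show "c \<bullet> (A *v x) = c \<bullet> Op B (\<lambda>b. b \<bullet> (A *v b)) x" by (simp add: coord_Op c)
qed

end



lemma outer_mult: "outer x y *v v = (y \<bullet> v) *\<^sub>R x"
  by (simp add: outer_def vec_eq_iff matrix_vector_mult_def inner_vec_def sum_distrib_left mult.commute mult.left_commute)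

lemma sum_matrix_mult: "(\<Sum>i\<in>I. (M i :: real^'n^'m)) *v v = (\<Sum>i\<in>I. M i *v v)"
  by (induction I rule: infinite_finite_induct) (auto simp: matrix_vector_mult_add_rdistrib)

lemma emp_cov_mult: "emp_cov n xs *v v =
   (1/real n) *\<^sub>R (\<Sum>i<n. (xs i \<bullet> v) *\<^sub>R xs i) - (emp_mean n xs \<bullet> v) *\<^sub>R emp_mean n xs"
  unfolding emp_cov_def
  by (simp add: matrix_vector_mult_diff_rdistrib sum_matrix_mult outer_mult flip: scaleR_matrix_vector_assoc)

lemma emp_cov_sym: "(emp_cov n xs *v x) \<bullet> y = x \<bullet> (emp_cov n xs *v y)"
  by (simp add: emp_cov_mult inner_diff_left inner_diff_right inner_sum_left inner_sum_right
      inner_commute mult.commute)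

lemma var_nonneg:
  fixes a :: "nat \<Rightarrow> real" assumes n: "n > 0"
  shows "((1/real n) * (\<Sum>i<n. a i))\<^sup>2 \<le> (1/real n) * (\<Sum>i<n. (a i)\<^sup>2)"
proof -
  define m where "m = (1/real n) * (\<Sum>i<n. a i)"
  have sm: "(\<Sum>i<n. a i) = real n * m" unfolding m_def using n by simp
  have "0 \<le> (\<Sum>i<n. (a i - m)\<^sup>2)" by (intro sum_nonneg) simp
  also have "\<dots> = (\<Sum>i<n. (a i)\<^sup>2) - 2 * m * (\<Sum>i<n. a i) + real n * m\<^sup>2"
    by (simp add: power2_diff sum.distrib sum_subtractf sum_distrib_left algebra_simps)
  also have "\<dots> = (\<Sum>i<n. (a i)\<^sup>2) - real n * m\<^sup>2" by (simp add: sm power2_eq_square)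
  finally have "real n * m\<^sup>2 \<le> (\<Sum>i<n. (a i)\<^sup>2)" by simp
  hence "m\<^sup>2 \<le> (1/real n) * (\<Sum>i<n. (a i)\<^sup>2)" using n by (simp add: field_simps)
  thus ?thesis unfolding m_def .
qed

lemma emp_cov_psd: assumes "n > 0" shows "x \<bullet> (emp_cov n xs *v x) \<ge> 0"
proof -
  have "emp_mean n xs \<bullet> x = (1/real n) * (\<Sum>i<n. xs i \<bullet> x)"
    by (simp add: emp_mean_def inner_sum_left)
  hence "x \<bullet> (emp_cov n xs *v x) = (1/real n) * (\<Sum>i<n. (xs i \<bullet> x)\<^sup>2) - ((1/real n) * (\<Sum>i<n. xs i \<bullet> x))\<^sup>2"
    by (simp add: emp_cov_mult inner_diff_right inner_sum_right inner_commute power2_eq_square)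
  thus ?thesis using var_nonneg[OF assms, of "\<lambda>i. xs i \<bullet> x"] by simp
qed

context onb begin

lemma inv_Op:
  fixes M :: "real^'n^'n"
  assumes M: "\<And>x. M *v x = Op B v x" and nz: "\<And>b. b \<in> B \<Longrightarrow> v b \<noteq> 0"
  shows "matrix_inv M *v y = Op B (\<lambda>b. 1 / v b) y"
proof -
  have "\<forall>x. M *v x = 0 \<longrightarrow> x = 0"
  proof safe
    fix x assume "M *v x = 0"
    hence "c \<bullet> x = 0" if "c \<in> B" for c using coord_Op[OF that, of v x] nz[OF that] M[of x] by simp
    thus "x = 0" using eqI[of x 0] by simp
  qed
  hence "invertible M" using matrix_left_invertible_ker invertible_left_inverse by blast
  hence "\<exists>A'. M ** A' = mat 1 \<and> A' ** M = mat 1" by (simp add: invertible_def)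
  hence "M ** matrix_inv M = mat 1" unfolding matrix_inv_def by (rule someI_ex[where P="\<lambda>A'. M ** A' = mat 1 \<and> A' ** M = mat 1", THEN conjunct1])
  hence Mz: "M *v (matrix_inv M *v y) = y" by (metis matrix_vector_mul_assoc matrix_vector_mul_lid)
  show ?thesis
  proof (rule eqI)
    fix c assume c: "c \<in> B"
    have "c \<bullet> y = v c * (c \<bullet> (matrix_inv M *v y))" using coord_Op[OF c] M Mz by metis
    thus "c \<bullet> (matrix_inv M *v y) = c \<bullet> Op B (\<lambda>b. 1 / v b) y"
      using nz[OF c] by (simp add: coord_Op c field_simps)
  qed
qed

end



lemma alg_zero:
  fixes s V E a w R m :: real
  assumes "s > 0" "V = s * s" "E * (a - 1) = V - 1"
  shows "((w - (w - R * m) / V) - R * m) * s - (w - R * m) * (inverse s / 2 * (2 * E * (a - 1))) = 0"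
proof -
  have "2 * E * (a - 1) = 2 * (s * s - 1)" using assms by simp
  hence "((w - (w - R * m) / V) - R * m) * s - (w - R * m) * (inverse s / 2 * (2 * E * (a - 1)))
      = ((w - (w - R * m) / (s * s)) - R * m) * s - (w - R * m) * (inverse s / 2 * (2 * (s * s - 1)))"
    using assms by simp
  also have "\<dots> = 0" using assms(1) by (simp add: field_simps)
  finally show ?thesis .
qed

lemma scalar_ode:
  fixes w :: "real \<Rightarrow> real" and T a m :: real
  defines "V \<equiv> \<lambda>t. 1 - exp (-2*(T-t)) + exp (-2*(T-t)) * a"
  assumes T: "T > 0" and a: "a > 0"
    and deriv: "\<And>t. t \<in> {0..T} \<Longrightarrow>
       (w has_real_derivative (w t - (w t - exp (-(T-t)) * m) / V t)) (at t within {0..T})"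
  shows "w T = m + sqrt (a / V 0) * (w 0 - exp (-T) * m)"
proof -
  have Vpos: "V t > 0" if "t \<in> {0..T}" for t
  proof -
    have e: "exp (-2*(T-t)) \<le> 1" "exp (-2*(T-t)) > 0" using that by auto
    have "V t = (1 - exp (-2*(T-t))) * 1 + exp (-2*(T-t)) * a" by (simp add: V_def)
    moreover have "(1 - exp (-2*(T-t))) * 1 + exp (-2*(T-t)) * a > 0"
      using e a by (smt (verit) mult_pos_pos)
    ultimately show ?thesis by simp
  qed
  define Q where "Q = (\<lambda>t. (w t - exp (-(T-t)) * m) / sqrt (V t))"
  have dQ: "(Q has_real_derivative 0) (at t within {0..T})" if t: "t \<in> {0..T}" for t
  proof -
    have Vt: "V t > 0" by (rule Vpos[OF t])
    have dV: "(V has_real_derivative (2 * exp (-2*(T-t)) * (a - 1))) (at t within {0..T})"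
      unfolding V_def by (auto intro!: derivative_eq_intros simp: algebra_simps)
    have dR: "((\<lambda>t. exp (-(T-t))) has_real_derivative exp (-(T-t))) (at t within {0..T})"
      by (auto intro!: derivative_eq_intros)
    have dS: "((\<lambda>t. sqrt (V t)) has_real_derivative (inverse (sqrt (V t)) / 2 * (2 * exp (-2*(T-t)) * (a - 1)))) (at t within {0..T})"
      by (rule DERIV_chain2[OF DERIV_real_sqrt[OF Vt] dV])
    have "(Q has_real_derivative
        (((w t - (w t - exp (-(T-t)) * m) / V t) - exp (-(T-t)) * m) * sqrt (V t)
         - (w t - exp (-(T-t)) * m) * (inverse (sqrt (V t)) / 2 * (2 * exp (-2*(T-t)) * (a - 1))))
        / (sqrt (V t) * sqrt (V t))) (at t within {0..T})"
      unfolding Q_def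
      by (intro DERIV_divide DERIV_diff deriv[OF t] DERIV_cmult_right dR dS) (use Vt in simp)
    moreover have "(((w t - (w t - exp (-(T-t)) * m) / V t) - exp (-(T-t)) * m) * sqrt (V t)
         - (w t - exp (-(T-t)) * m) * (inverse (sqrt (V t)) / 2 * (2 * exp (-2*(T-t)) * (a - 1)))) = 0"
    proof -
      have VV: "exp (-2*(T-t)) * (a - 1) = V t - 1" by (simp add: V_def algebra_simps)
      have sq: "sqrt (V t) * sqrt (V t) = V t" using Vt by simp
      show ?thesis by (rule alg_zero) (use Vt sq VV in auto)
    qed
    ultimately show ?thesis by simp
  qed
  obtain C where C: "\<And>t. t \<in> {0..T} \<Longrightarrow> Q t = C"
    using has_field_derivative_zero_constant[of "{0..T}" Q] dQ by auto
  have "Q T = Q 0" using C T by simp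
  hence "(w T - m) / sqrt a = (w 0 - exp (-T) * m) / sqrt (V 0)"
    unfolding Q_def by (simp add: V_def)
  moreover have "V 0 > 0" using Vpos T by simp
  ultimately show ?thesis using a by (simp add: real_sqrt_divide field_simps)
qed



lemma linear_borel: "linear (L :: real^'n \<Rightarrow> real^'m) \<Longrightarrow> L \<in> borel_measurable borel"
  by (intro borel_measurable_continuous_onI linear_continuous_on) (simp add: linear_conv_bounded_linear)

lemma cis_meas: "(\<lambda>x. cis (u \<bullet> x)) \<in> borel_measurable borel"
  by (rule borel_measurable_continuous_onI) (auto intro!: continuous_intros simp: cis_conv_exp)

lemma gauss_affine:
  fixes L L' :: "real^'n \<Rightarrow> real^'n" and z0 :: "'a \<Rightarrow> real^'n"
  assumes P: "prob_space M" and z0_rv: "z0 \<in> borel_measurable M"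
    and z0_std: "is_gaussian (distr M borel z0) 0 (mat 1)"
    and lin: "linear L"
    and adj: "\<And>x u. u \<bullet> L x = L' u \<bullet> x"
    and cov: "\<And>u. u \<bullet> (C *v u) = L' u \<bullet> L' u"
  shows "is_gaussian (distr M borel (\<lambda>\<omega>. L (z0 \<omega>) + b)) b C"
proof -
  have Fm: "(\<lambda>\<omega>. L (z0 \<omega>) + b) \<in> borel_measurable M"
    using measurable_compose[OF z0_rv linear_borel[OF lin]] by measurable
  have ps: "prob_space (distr M borel (\<lambda>\<omega>. L (z0 \<omega>) + b))"
    by (rule prob_space.prob_space_distr[OF P Fm])
  have char: "(CLINT x|distr M borel z0. cis (v \<bullet> x)) = complex_of_real (exp (- (v \<bullet> v) / 2))" for v
    using z0_std unfolding is_gaussian_def by simp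
  have "(CLINT x|distr M borel (\<lambda>\<omega>. L (z0 \<omega>) + b). cis (u \<bullet> x))
     = cis (u \<bullet> b) * complex_of_real (exp (- (u \<bullet> (C *v u)) / 2))" for u
  proof -
    have "(CLINT x|distr M borel (\<lambda>\<omega>. L (z0 \<omega>) + b). cis (u \<bullet> x))
        = (CLINT \<omega>|M. cis (u \<bullet> (L (z0 \<omega>) + b)))"
      by (rule integral_distr[OF Fm cis_meas])
    also have "\<dots> = (CLINT \<omega>|M. cis (u \<bullet> b) * cis (L' u \<bullet> z0 \<omega>))"
      by (simp add: inner_add_right adj cis_mult[symmetric] add.commute)
    also have "\<dots> = cis (u \<bullet> b) * (CLINT \<omega>|M. cis (L' u \<bullet> z0 \<omega>))" by simp
    also have "(CLINT \<omega>|M. cis (L' u \<bullet> z0 \<omega>)) = (CLINT x|distr M borel z0. cis (L' u \<bullet> x))"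
      by (rule integral_distr[OF z0_rv cis_meas, symmetric])
    also have "\<dots> = complex_of_real (exp (- (u \<bullet> (C *v u)) / 2))" by (simp add: char cov)
    finally show ?thesis .
  qed
  thus ?thesis using ps unfolding is_gaussian_def by simp
qed



lemma alg2:
  fixes V k w R u :: real
  assumes "V \<noteq> 0" "k \<noteq> 0"
  shows "w - w / V + (R / k) * (u / V) = w - (w - R * ((1 / k) * u)) / V"
  using assms by (simp add: field_simps)

theorem mainTheorem4:
  fixes n :: nat and xs :: "nat \<Rightarrow> real^'d" and \<gamma> :: real
    and M :: "'a measure" and z0 :: "'a \<Rightarrow> real^'d"
    and z :: "real \<Rightarrow> real \<Rightarrow> 'a \<Rightarrow> real^'d"
  defines "\<mu> \<equiv> emp_mean n xs"
    and "\<Sigma> \<equiv> emp_cov n xs"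
    and "c \<equiv> \<gamma>\<^sup>2 / (1 + \<gamma>\<^sup>2) * (norm (emp_mean n xs))\<^sup>2"
  defines "Mt \<equiv> (\<lambda>\<tau>. (sigma_sched \<tau>)\<^sup>2 *\<^sub>R mat 1 + (r_sched \<tau>)\<^sup>2 *\<^sub>R (\<Sigma> + c *\<^sub>R mat 1))"
  assumes n_pos: "n > 0"
    and gamma_nonneg: "\<gamma> \<ge> 0"
    and nondeg: "\<gamma> *\<^sub>R \<mu> \<noteq> 0 \<or> rank \<Sigma> = CARD('d)"
    and P: "prob_space M"
    and z0_rv: "z0 \<in> borel_measurable M"
    and z0_std: "is_gaussian (distr M borel z0) 0 (mat 1)"
    and init: "\<And>T \<omega>. T > 0 \<Longrightarrow> \<omega> \<in> space M \<Longrightarrow> z T 0 \<omega> = z0 \<omega>"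
    and ode: "\<And>T \<omega> t. T > 0 \<Longrightarrow> \<omega> \<in> space M \<Longrightarrow> t \<in> {0..T} \<Longrightarrow>
       ((\<lambda>s. z T s \<omega>) has_vector_derivative
          (z T t \<omega> - matrix_inv (Mt (T - t)) *v z T t \<omega>
           + (r_sched (T - t) / (1 + \<gamma>\<^sup>2)) *\<^sub>R (matrix_inv (Mt (T - t)) *v \<mu>)))
         (at t within {0..T})"
  shows "(\<forall>T>0. gaussian (distr M borel (z T T)))
    \<and> (\<exists>G. is_gaussian G ((1 / (1 + \<gamma>\<^sup>2)) *\<^sub>R \<mu>) (\<Sigma> + c *\<^sub>R mat 1)
           \<and> weak_conv_at_top (\<lambda>T. distr M borel (z T T)) G)"
proof -
  have symS: "\<And>x y. (\<Sigma> *v x) \<bullet> y = x \<bullet> (\<Sigma> *v y)" unfolding \<Sigma>_def by (rule emp_cov_sym)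
  obtain B where onbB: "ONB \<Sigma> B" and cB: "card B = CARD('d)"
    using spectral_card[OF symS, of "CARD('d)"] by auto
  interpret onb \<Sigma> B by unfold_locales (use onbB cB symS in auto)
  define lam where "lam = (\<lambda>b. b \<bullet> (\<Sigma> *v b))"
  have lam_nn: "lam b \<ge> 0" for b unfolding lam_def \<Sigma>_def by (rule emp_cov_psd[OF n_pos])
  have c_nn: "c \<ge> 0" unfolding c_def by simp
  have apos: "lam b + c > 0" if b: "b \<in> B" for b
    using nondeg
  proof
    assume "\<gamma> *\<^sub>R \<mu> \<noteq> 0"
    hence "\<gamma> \<noteq> 0" "\<mu> \<noteq> 0" by auto
    hence "c > 0" unfolding c_def \<mu>_def by (simp add: add_pos_nonneg)
    thus ?thesis using lam_nn[of b] by simp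
  next
    assume "rank \<Sigma> = CARD('d)"
    hence inj: "inj ((*v) \<Sigma>)" by (simp add: full_rank_injective)
    have "lam b \<noteq> 0"
    proof
      assume "lam b = 0"
      hence "\<Sigma> *v b = \<Sigma> *v 0" using eig[OF b] unfolding lam_def by simp
      hence "b = 0" using inj by (meson injD)
      thus False using n1[OF b] by simp
    qed
    thus ?thesis using lam_nn[of b] c_nn by simp
  qed
  define Vf where "Vf = (\<lambda>\<tau> b. 1 - exp (-2*\<tau>) + exp (-2*\<tau>) * (lam b + c))"
  have Vpos: "Vf \<tau> b > 0" if "\<tau> \<ge> 0" "b \<in> B" for \<tau> b
  proof -
    have e: "exp (-2*\<tau>) \<le> 1" "exp (-2*\<tau>) > 0" using that by auto
    have "(1 - exp (-2*\<tau>)) * 1 + exp (-2*\<tau>) * (lam b + c) > 0"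
      using e apos[OF that(2)] by (smt (verit) mult_pos_pos)
    thus ?thesis unfolding Vf_def by simp
  qed
  have sig2: "(sigma_sched \<tau>)\<^sup>2 = 1 - exp (-2*\<tau>)" if "\<tau> \<ge> 0" for \<tau>
    using that unfolding sigma_sched_def by simp
  have r2: "(r_sched \<tau>)\<^sup>2 = exp (-2*\<tau>)" for \<tau>
    unfolding r_sched_def by (simp add: power2_eq_square flip: exp_add)
  have Mt_Op: "Mt \<tau> *v x = Op B (Vf \<tau>) x" if "\<tau> \<ge> 0" for \<tau> x
  proof (rule eqI)
    fix b assume b: "b \<in> B"
    have Sb: "b \<bullet> (\<Sigma> *v x) = lam b * (b \<bullet> x)"
      by (subst A_Op) (simp add: coord_Op b lam_def)
    show "b \<bullet> (Mt \<tau> *v x) = b \<bullet> Op B (Vf \<tau>) x"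
      unfolding Mt_def using that
      by (simp add: coord_Op b matrix_vector_mult_add_rdistrib inner_add_right Sb sig2 r2 Vf_def
          flip: scaleR_matrix_vector_assoc) (simp add: algebra_simps)
  qed
  have Minv: "matrix_inv (Mt \<tau>) *v y = Op B (\<lambda>b. 1 / Vf \<tau> b) y" if "\<tau> \<ge> 0" for \<tau> y
    by (rule inv_Op[OF Mt_Op[OF that]]) (metis Vpos[OF that] less_irrefl)
  define m0 where "m0 = (1 / (1 + \<gamma>\<^sup>2)) *\<^sub>R \<mu>"
  define g where "g = (\<lambda>T b. sqrt ((lam b + c) / Vf T b))"
  define F where "F = (\<lambda>T \<omega>. Op B (g T) (z0 \<omega>) + (m0 - exp (-T) *\<^sub>R Op B (g T) m0))"
  have zF: "z T T \<omega> = F T \<omega>" if T: "T > 0" and \<omega>: "\<omega> \<in> space M" for T \<omega>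
  proof (rule eqI)
    fix b assume b: "b \<in> B"
    define w where "w = (\<lambda>t. b \<bullet> z T t \<omega>)"
    define mb where "mb = b \<bullet> m0"
    have "w T = mb + sqrt ((lam b + c) / (1 - exp (-2*(T-0)) + exp (-2*(T-0)) * (lam b + c))) * (w 0 - exp (-T) * mb)"
    proof (rule scalar_ode[OF T apos[OF b]])
      fix t assume t: "t \<in> {0..T}"
      have tau: "T - t \<ge> 0" using t by simp
      have "((\<lambda>s. b \<bullet> z T s \<omega>) has_vector_derivative
          b \<bullet> (z T t \<omega> - matrix_inv (Mt (T - t)) *v z T t \<omega>
           + (r_sched (T - t) / (1 + \<gamma>\<^sup>2)) *\<^sub>R (matrix_inv (Mt (T - t)) *v \<mu>))) (at t within {0..T})"
        by (rule bounded_linear.has_vector_derivative[OF bounded_linear_inner_right ode[OF T \<omega> t]])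
      moreover have "b \<bullet> (z T t \<omega> - matrix_inv (Mt (T - t)) *v z T t \<omega>
           + (r_sched (T - t) / (1 + \<gamma>\<^sup>2)) *\<^sub>R (matrix_inv (Mt (T - t)) *v \<mu>))
          = w t - (w t - exp (-(T-t)) * mb) / (1 - exp (-2*(T-t)) + exp (-2*(T-t)) * (lam b + c))"
      proof -
        have V0: "Vf (T-t) b \<noteq> 0" using Vpos[OF tau b] by simp
        have k0: "1 + \<gamma>\<^sup>2 \<noteq> 0" by (metis add_pos_nonneg zero_le_power2 zero_less_one less_irrefl)
        have "b \<bullet> (z T t \<omega> - matrix_inv (Mt (T - t)) *v z T t \<omega>
           + (r_sched (T - t) / (1 + \<gamma>\<^sup>2)) *\<^sub>R (matrix_inv (Mt (T - t)) *v \<mu>))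
          = w t - w t / Vf (T-t) b + (exp (-(T-t)) / (1 + \<gamma>\<^sup>2)) * ((b \<bullet> \<mu>) / Vf (T-t) b)"
          by (simp add: Minv[OF tau] inner_add_right inner_diff_right coord_Op b w_def r_sched_def)
        also have "\<dots> = w t - (w t - exp (-(T-t)) * mb) / Vf (T-t) b"
          using alg2[OF V0 k0] by (simp add: mb_def m0_def)
        finally show ?thesis by (simp add: Vf_def)
      qed
      ultimately show "(w has_real_derivative w t - (w t - exp (-(T-t)) * mb) /
            (1 - exp (-2*(T-t)) + exp (-2*(T-t)) * (lam b + c))) (at t within {0..T})"
        unfolding w_def by (simp add: has_real_derivative_iff_has_vector_derivative)
    qed
    moreover have "w 0 = b \<bullet> z0 \<omega>" unfolding w_def using init[OF T \<omega>] by simp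
    ultimately show "b \<bullet> z T T \<omega> = b \<bullet> F T \<omega>"
      unfolding w_def F_def mb_def
      by (simp add: inner_add_right inner_diff_right coord_Op b g_def Vf_def algebra_simps)
  qed
  have distrF: "distr M borel (z T T) = distr M borel (F T)" if T: "T > 0" for T
    by (rule distr_cong) (auto simp: zF[OF T])
  have Op_adj: "u \<bullet> Op B h x = Op B h u \<bullet> x" for h u x by (simp add: Op_inner)
  have Op_sq: "Op B h u \<bullet> Op B h u = u \<bullet> Op B (\<lambda>b. h b * h b) u" for h u
    by (simp add: Op_inner Op_comp)
  have gauss_T: "is_gaussian (distr M borel (F T)) (m0 - exp (-T) *\<^sub>R Op B (g T) m0)
      (matrix (Op B (\<lambda>b. g T b * g T b)))" for T
    unfolding F_def
  proof (rule gauss_affine[OF P z0_rv z0_std Op_linear])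
    show "u \<bullet> Op B (g T) x = Op B (g T) u \<bullet> x" for x u by (rule Op_adj)
    show "u \<bullet> (matrix (Op B (\<lambda>b. g T b * g T b)) *v u) = Op B (g T) u \<bullet> Op B (g T) u" for u
      by (simp add: matrix_works[OF Op_linear[folded linear_matrix_vector_mul_eq]] Op_sq)
  qed
  have part1: "\<forall>T>0. gaussian (distr M borel (z T T))"
    using gauss_T distrF unfolding gaussian_def by metis
  define ginf where "ginf = (\<lambda>b. sqrt (lam b + c))"
  define Finf where "Finf = (\<lambda>\<omega>. Op B ginf (z0 \<omega>) + m0)"
  define G where "G = distr M borel Finf"
  have gaussG: "is_gaussian G ((1 / (1 + \<gamma>\<^sup>2)) *\<^sub>R \<mu>) (\<Sigma> + c *\<^sub>R mat 1)"
    unfolding G_def Finf_def m0_def[symmetric]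
  proof (rule gauss_affine[OF P z0_rv z0_std Op_linear])
    show "u \<bullet> Op B ginf x = Op B ginf u \<bullet> x" for x u by (rule Op_adj)
    show "u \<bullet> ((\<Sigma> + c *\<^sub>R mat 1) *v u) = Op B ginf u \<bullet> Op B ginf u" for u
    proof -
      have "Op B (\<lambda>b. ginf b * ginf b) u = Op B (\<lambda>b. lam b + c * 1) u"
        by (rule arg_cong[where f="\<lambda>h. Op B h u"])
          (auto intro!: ext simp: ginf_def abs_of_nonneg add_nonneg_nonneg[OF lam_nn c_nn])
      also have "\<dots> = Op B lam u + c *\<^sub>R u"
        using Op_add[of lam "\<lambda>b. c * 1" u] Op_scale[of c "\<lambda>_. 1" u] Op_1[of u] by simp
      also have "Op B lam u = \<Sigma> *v u" unfolding lam_def by (rule A_Op[symmetric])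
      finally have "Op B ginf u \<bullet> Op B ginf u = u \<bullet> (\<Sigma> *v u + c *\<^sub>R u)" by (simp add: Op_sq)
      thus ?thesis by (simp add: matrix_vector_mult_add_rdistrib flip: scaleR_matrix_vector_assoc)
    qed
  qed
  interpret prob_space M by (rule P)
  have opm: "(\<lambda>\<omega>. Op B h (z0 \<omega>)) \<in> borel_measurable M" for h
    using measurable_compose[OF z0_rv linear_borel[OF Op_linear]] by simp
  have FmT: "F T \<in> borel_measurable M" for T
    unfolding F_def by (intro borel_measurable_add opm borel_measurable_const)
  have Fminf: "Finf \<in> borel_measurable M"
    unfolding Finf_def by (intro borel_measurable_add opm borel_measurable_const)
  have e2: "((\<lambda>T::real. exp (-2*T)) \<longlongrightarrow> 0) at_top" by real_asymp
  have e1: "((\<lambda>T::real. exp (-T)) \<longlongrightarrow> 0) at_top" by real_asymp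
  have gl: "((\<lambda>T. g T b) \<longlongrightarrow> ginf b) at_top" for b
  proof -
    have "((\<lambda>T. Vf T b) \<longlongrightarrow> 1 - 0 + 0 * (lam b + c)) at_top"
      unfolding Vf_def by (intro tendsto_intros e2)
    hence "((\<lambda>T. sqrt ((lam b + c) / Vf T b)) \<longlongrightarrow> sqrt ((lam b + c) / 1)) at_top"
      by (intro tendsto_intros) auto
    thus ?thesis unfolding g_def ginf_def by simp
  qed
  have Opl: "((\<lambda>T. Op B (g T) x) \<longlongrightarrow> Op B ginf x) at_top" for x
    unfolding Op_def by (intro tendsto_intros gl)
  have Fl: "((\<lambda>T. F T \<omega>) \<longlongrightarrow> Finf \<omega>) at_top" for \<omega>
  proof -
    have "((\<lambda>T. F T \<omega>) \<longlongrightarrow> Op B ginf (z0 \<omega>) + (m0 - 0 *\<^sub>R Op B ginf m0)) at_top"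
      unfolding F_def by (intro tendsto_intros Opl e1)
    thus ?thesis unfolding Finf_def by simp
  qed
  have wc: "weak_conv_at_top (\<lambda>T. distr M borel (z T T)) G"
    unfolding weak_conv_at_top_def
  proof (intro allI impI, elim conjE)
    fix f :: "real^'d \<Rightarrow> real"
    assume cf: "continuous_on UNIV f" and bf: "bounded (range f)"
    obtain K where K: "\<And>x. norm (f x) \<le> K" using bf unfolding bounded_iff by auto
    have fm: "f \<in> borel_measurable borel" by (rule borel_measurable_continuous_onI[OF cf])
    have icf: "isCont f x" for x using cf by (simp add: continuous_on_eq_continuous_at)
    have lim: "((\<lambda>T. integral\<^sup>L M (\<lambda>\<omega>. f (F T \<omega>))) \<longlongrightarrow> integral\<^sup>L M (\<lambda>\<omega>. f (Finf \<omega>))) at_top"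
    proof (rule integral_dominated_convergence_at_top[where w="\<lambda>_. K"])
      show "(\<lambda>\<omega>. f (Finf \<omega>)) \<in> borel_measurable M" using measurable_compose[OF Fminf fm] by simp
      show "(\<lambda>\<omega>. f (F T \<omega>)) \<in> borel_measurable M" for T using measurable_compose[OF FmT fm] by simp
      show "integrable M (\<lambda>_. K)" by simp
      show "AE \<omega> in M. ((\<lambda>T. f (F T \<omega>)) \<longlongrightarrow> f (Finf \<omega>)) at_top"
        by (intro AE_I2 isCont_tendsto_compose[OF icf Fl])
      show "\<forall>\<^sub>F T in at_top. AE \<omega> in M. norm (f (F T \<omega>)) \<le> K"
        by (intro always_eventually allI AE_I2 K)
    qed
    have "eventually (\<lambda>T. integral\<^sup>L M (\<lambda>\<omega>. f (F T \<omega>)) = integral\<^sup>L (distr M borel (z T T)) f) at_top"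
      using eventually_gt_at_top[of 0]
    proof eventually_elim
      case (elim T)
      show ?case by (simp add: distrF[OF elim] integral_distr[OF FmT fm])
    qed
    moreover have "integral\<^sup>L G f = integral\<^sup>L M (\<lambda>\<omega>. f (Finf \<omega>))"
      unfolding G_def by (rule integral_distr[OF Fminf fm])
    ultimately show "((\<lambda>T. integral\<^sup>L (distr M borel (z T T)) f) \<longlongrightarrow> integral\<^sup>L G f) at_top"
      using lim by (simp add: tendsto_cong)
  qed
  show ?thesis using part1 gaussG wc by blast
qed


end
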